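(* Let $\mathfrak{C}$ be a chromosome-set. If there exists $K\ge 1$ such that every string of length $K$ is a conductor for $\mathfrak{C}$, then $\mathrm{CPC}(\mathrm{DBG}(\mathfrak{C},K))=\mathfrak{C}$.
   Context: All strings are over a fixed finite alphabet $\Sigma$. A cyclic string is a bi-infinite periodic word $\mathbb{Z}\to\Sigma$, considered up to shifting indices; for a nonempty finite string $x$, $\langle x\rangle$ is the cyclic string repeating $x$ in both directions. A chromosome-set is a set of cyclic strings; a finite string is a substring of it if it is a contiguous block of one of its elements. A finite string $v$ is a conductor for $\mathfrak{C}$ if for all nonempty finite strings $a,b$ such that $va$ and $vb$ both end with $v$, we have $\langle ab\rangle\in\mathfrak{C}$ if and only if $\langle a\rangle\in\mathfrak{C}$ and $\langle b\rangle\in\mathfrak{C}$. $\mathrm{DBG}(\mathfrak{C},K)$ is the de Bruijn graph: its vertices are the strings of length $K$ that are substrings of $\mathfrak{C}$ (labelled by themselves), and for each string $w$ of length $K+1$ that is a substring of $\mathfrak{C}$ there is an edge labelled $w$ from the vertex equal to its length-$K$ prefix to the vertex equal to its length-$K$ suffix. The label of a walk $v_0,e_1,\dots,e_n,v_n$ is $Label(e_1)$ followed, for $i\ge 2$, by $Label(e_i)$ with its first $|Label(v_{i-1})|$ characters removed. A circuit is a primitive closed walk up to rotation; if its walk label is $Label(v_0)x$, its label is $\langle x\rangle$. $\mathrm{CPC}(\mathfrak{G})$ is the set of circuit labels of a graph $\mathfrak{G}$. *)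

theory Defs
  imports Main "HOL-Library.Sublist"
begin

text \<open>A cyclic string is a periodic bi-infinite word considered up to shifting
  indices; we represent it as the full shift-orbit (a set of bi-infinite words).\<close>

definition shift_orbit :: "(int \<Rightarrow> 'a) \<Rightarrow> (int \<Rightarrow> 'a) set" where
  "shift_orbit f = range (\<lambda>k::int. \<lambda>i. f (i + k))"

definition periodic_word :: "(int \<Rightarrow> 'a) \<Rightarrow> bool" where
  "periodic_word f \<longleftrightarrow> (\<exists>p::int. p > 0 \<and> (\<forall>i. f (i + p) = f i))"

definition is_cyclic_string :: "(int \<Rightarrow> 'a) set \<Rightarrow> bool" where
  "is_cyclic_string S \<longleftrightarrow> (\<exists>f. periodic_word f \<and> S = shift_orbit f)"

definition cyc :: "'a list \<Rightarrow> (int \<Rightarrow> 'a) set" where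
  "cyc x = shift_orbit (\<lambda>i. x ! nat (i mod int (length x)))"

definition chromosome_set :: "(int \<Rightarrow> 'a) set set \<Rightarrow> bool" where
  "chromosome_set C \<longleftrightarrow> (\<forall>S\<in>C. is_cyclic_string S)"

definition substring_of :: "'a list \<Rightarrow> (int \<Rightarrow> 'a) set set \<Rightarrow> bool" where
  "substring_of w C \<longleftrightarrow>
     (\<exists>S\<in>C. \<exists>f\<in>S. \<exists>i::int. \<forall>j<length w. f (i + int j) = w ! j)"

definition conductor :: "(int \<Rightarrow> 'a) set set \<Rightarrow> 'a list \<Rightarrow> bool" where
  "conductor C v \<longleftrightarrow>
     (\<forall>a b. a \<noteq> [] \<longrightarrow> b \<noteq> [] \<longrightarrow> suffix v (v @ a) \<longrightarrow> suffix v (v @ b) \<longrightarrow>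
        (cyc (a @ b) \<in> C \<longleftrightarrow> cyc a \<in> C \<and> cyc b \<in> C))"

record ('v, 'e, 'a) lgraph =
  verts :: "'v set"
  arcs :: "'e set"
  src :: "'e \<Rightarrow> 'v"
  tgt :: "'e \<Rightarrow> 'v"
  vlab :: "'v \<Rightarrow> 'a list"
  elab :: "'e \<Rightarrow> 'a list"

definition DBG :: "(int \<Rightarrow> 'a) set set \<Rightarrow> nat \<Rightarrow> ('a list, 'a list, 'a) lgraph" where
  "DBG C K = \<lparr> verts = {w. length w = K \<and> substring_of w C},
               arcs = {w. length w = Suc K \<and> substring_of w C},
               src = take K, tgt = drop 1, vlab = id, elab = id \<rparr>"

definition closed_walk :: "('v, 'e, 'a) lgraph \<Rightarrow> 'e list \<Rightarrow> bool" where
  "closed_walk G es \<longleftrightarrow> es \<noteq> [] \<and> set es \<subseteq> arcs G \<and>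
     (\<forall>e\<in>set es. src G e \<in> verts G \<and> tgt G e \<in> verts G) \<and>
     (\<forall>i. Suc i < length es \<longrightarrow> tgt G (es ! i) = src G (es ! Suc i)) \<and>
     tgt G (last es) = src G (hd es)"

definition walk_label :: "('v, 'e, 'a) lgraph \<Rightarrow> 'e list \<Rightarrow> 'a list" where
  "walk_label G es = elab G (hd es) @
     concat (map (\<lambda>e. drop (length (vlab G (src G e))) (elab G e)) (tl es))"

definition primitive_walk :: "'e list \<Rightarrow> bool" where
  "primitive_walk es \<longleftrightarrow> \<not> (\<exists>ys k. k \<ge> 2 \<and> es = concat (replicate k ys))"

text \<open>Circuit labels: a circuit whose walk label is Label(v0) x has label \<langle>x\<rangle>.
  (Rotations of a closed walk yield the same cyclic label, so taking all closed
   primitive walks gives the set of circuit labels.)\<close>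
definition CPC :: "('v, 'e, 'a) lgraph \<Rightarrow> (int \<Rightarrow> 'a) set set" where
  "CPC G = {cyc x | es x. closed_walk G es \<and> primitive_walk es \<and> x \<noteq> [] \<and>
                          walk_label G es = vlab G (src G (hd es)) @ x}"

end

theory Submission
  imports Defs
begin


definition pe :: "'a list \<Rightarrow> 'a list \<Rightarrow> 'a list" where
  "pe u s = drop (length s) (u @ s)"

lemma pe_append: "pe u (s @ t) = pe (pe u s) t"
proof -
  have 1: "drop (length s) ((u @ s) @ t) = drop (length s) (u @ s) @ t" by simp
  have "pe u (s @ t) = drop (length t) (drop (length s) ((u @ s) @ t))"
    unfolding pe_def by (simp only: length_append drop_drop append_assoc add.commute)
  also have "\<dots> = pe (pe u s) t" unfolding 1 pe_def by (rule refl)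
  finally show ?thesis .
qed

lemma pe_length[simp]: "length (pe u s) = length u"
  unfolding pe_def by simp

lemma suffix_pe: "suffix v (v @ a) \<longleftrightarrow> pe v a = v"
proof
  assume "suffix v (v @ a)"
  then obtain zs where "v @ a = zs @ v" by (auto simp: suffix_def)
  moreover hence "length zs = length a" by (metis add.commute length_append add_right_imp_eq)
  ultimately show "pe v a = v" unfolding pe_def by (metis append_eq_conv_conj)
next
  assume "pe v a = v"
  then show "suffix v (v @ a)" unfolding pe_def suffix_def
    by (metis append_take_drop_id)
qed

lemma per_int: fixes p :: int assumes "\<forall>i. f (i + p) = f i" shows "f (i + m * p) = f i"
proof -
  have nat: "f (j + int n * p) = f j" for j n
    by (induction n) (auto simp: algebra_simps assms[rule_format, of "j + int _ * p", simplified algebra_simps] )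
  show ?thesis
  proof (cases "m \<ge> 0")
    case True then show ?thesis using nat[of i "nat m"] by simp
  next
    case False
    have "f (i + m * p + int (nat (-m)) * p) = f (i + m * p)" by (rule nat)
    then show ?thesis using False by (simp add: algebra_simps)
  qed
qed

lemma per_mod: fixes p :: int assumes "\<forall>i. f (i + p) = f i" shows "f (i mod p) = f i"
  using per_int[OF assms, of "i mod p" "i div p"] by (metis mult.commute mod_div_mult_eq)

lemma so_shift: "shift_orbit (\<lambda>i. f (i + k)) = shift_orbit f"
proof -
  have e: "(\<lambda>k' i. f (i + k' + k)) = (\<lambda>k i. f (i + k)) \<circ> ((+) k)"
    by (intro ext) (simp add: algebra_simps)
  have "range (\<lambda>k' i. f (i + k' + k)) = (\<lambda>k i. f (i + k)) ` range ((+) k)"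
    unfolding e image_comp by simp
  also have "\<dots> = range (\<lambda>k i. f (i + k))" using surj_plus[of k] by simp
  finally show ?thesis unfolding shift_orbit_def by simp
qed

lemma so_mem: assumes "g \<in> shift_orbit f" shows "shift_orbit g = shift_orbit f"
proof -
  obtain k where "g = (\<lambda>i. f (i+k))" using assms unfolding shift_orbit_def by auto
  then show ?thesis using so_shift by simp
qed

lemma so_self: "f \<in> shift_orbit f"
  unfolding shift_orbit_def by (auto intro: image_eqI[where x=0])

lemma cyc_window:
  assumes "\<forall>i. f (i + int p) = f i" "p > 0"
  shows "cyc (map (\<lambda>t. f (a + int t)) [0..<p]) = shift_orbit f"
proof -
  have "(\<lambda>i. map (\<lambda>t. f (a + int t)) [0..<p] ! nat (i mod int (length (map (\<lambda>t. f (a + int t)) [0..<p]))))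
       = (\<lambda>i. f (i + a))"
  proof
    fix i
    have "0 \<le> i mod int p" "i mod int p < int p" using assms(2) by auto
    then have "nat (i mod int p) < p" by simp
    then have "map (\<lambda>t. f (a + int t)) [0..<p] ! nat (i mod int p) = f (a + i mod int p)"
      using \<open>0 \<le> i mod int p\<close> by simp
    also have "\<dots> = f ((a + i) mod int p)"
      using per_mod[of "\<lambda>j. f (a + j)" "int p"] assms(1) per_mod[OF assms(1), of "a+i"] 
      by (metis add.assoc mod_add_right_eq)
    also have "\<dots> = f (i + a)" using per_mod[OF assms(1)] by (simp add: add.commute)
    finally show "map (\<lambda>t. f (a + int t)) [0..<p] ! nat (i mod int (length (map (\<lambda>t. f (a + int t)) [0..<p]))) = f (i + a)" by simp
  qed
  then show ?thesis unfolding cyc_def using so_shift by metis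
qed



lemma edge_loop:
  assumes "chromosome_set C" "substring_of w C" "length w = Suc K"
  shows "\<exists>r. cyc (last w # r) \<in> C \<and> pe (take K w) (last w # r) = take K w"
proof -
  obtain S f i where S: "S \<in> C" "f \<in> S" and fi: "\<forall>j<length w. f (i + int j) = w ! j"
    using assms(2) unfolding substring_of_def by blast
  obtain g where g: "periodic_word g" "S = shift_orbit g"
    using assms(1) S(1) unfolding chromosome_set_def is_cyclic_string_def by blast
  obtain p::int where p: "p>0" "\<forall>i. g (i+p) = g i" using g(1) unfolding periodic_word_def by blast
  obtain k where fk: "f = (\<lambda>i. g (i + k))" using S(2) g(2) unfolding shift_orbit_def by auto
  define n where "n = nat p"
  have n: "n > 0" "\<forall>i. f (i + int n) = f i"
  proof -
    show "n > 0" using p n_def by simp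
    show "\<forall>i. f (i + int n) = f i"
    proof
      fix i
      have "g (i + k + p) = g (i + k)" using p(2) by blast
      then show "f (i + int n) = f i" using p(1) unfolding fk n_def by (simp add: algebra_simps)
    qed
  qed
  have Sf: "S = shift_orbit f" using g(2) S(2) so_mem by metis
  define z where "z = map (\<lambda>t. f (i + int K + int t)) [0..<n]"
  have cz: "cyc z = S" unfolding z_def Sf by (rule cyc_window[OF n(2) n(1)])
  have lz: "length z = n" unfolding z_def by simp
  have zne: "z \<noteq> []" using n(1) lz by auto
  have "hd z = f (i + int K)" unfolding z_def using n(1) by (simp add: hd_map)
  also have "\<dots> = w ! K" using fi assms(3) by auto
  also have "\<dots> = last w" using assms(3) by (metis diff_Suc_1 last_conv_nth list.size(3) nat.simps(3))
  finally have hz: "hd z = last w" .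
  have gen: "(take K w @ z) ! m = f (i + int m)" if "m < K + n" for m
  proof (cases "m < K")
    case True
    then show ?thesis using fi assms(3) by (simp add: nth_append)
  next
    case False
    then have "(take K w @ z) ! m = z ! (m - K)" using assms(3) by (simp add: nth_append)
    also have "\<dots> = f (i + int K + int (m - K))"
    proof -
      have "m - K < n" using that False by simp
      then show ?thesis unfolding z_def by simp
    qed
    also have "\<dots> = f (i + int m)" using False by (simp add: of_nat_diff)
    finally show ?thesis .
  qed
  have pz: "pe (take K w) z = take K w"
  proof (rule nth_equalityI)
    show "length (pe (take K w) z) = length (take K w)" by simp
    fix j assume "j < length (pe (take K w) z)"
    then have j: "j < K" using assms(3) by simp
    have "pe (take K w) z ! j = (take K w @ z) ! (n + j)"
      unfolding pe_def lz using assms(3) by (subst nth_drop) (auto simp: lz)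
    also have "\<dots> = f (i + int n + int j)" using gen[of "n+j"] j by (simp add: add.assoc)
    also have "\<dots> = f (i + int j)" using n(2)[rule_format, of "i + int j"] by (simp add: algebra_simps)
    also have "\<dots> = take K w ! j" using fi j assms(3) by simp
    finally show "pe (take K w) z ! j = take K w ! j" .
  qed
  have "z = last w # tl z" using zne hz by (metis list.collapse)
  then show ?thesis using cz S(1) pz by metis
qed



lemma split_edge: "length e = Suc K \<Longrightarrow> take K e @ [last e] = e"
  by (metis append_butlast_last_id butlast_conv_take diff_Suc_1 list.size(3) nat.simps(3))

lemma drop_edge: "length e = Suc K \<Longrightarrow> drop K e = [last e]"
proof -
  assume a: "length e = Suc K"
  have "drop K e = drop K (take K e @ [last e])" using split_edge[OF a] by simp
  also have "\<dots> = [last e]" using a by simp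
  finally show ?thesis .
qed

lemma pe_edge: assumes a: "length e = Suc K" shows "pe (take K e) [last e] = drop 1 e"
proof -
  have "pe (take K e) [last e] = drop (length [last e]) (take K e @ [last e])" by (simp only: pe_def)
  also have "\<dots> = drop (length [last e]) e" by (simp only: split_edge[OF a])
  also have "\<dots> = drop 1 e" by simp
  finally show ?thesis .
qed

definition chn :: "nat \<Rightarrow> 'a list list \<Rightarrow> bool" where
  "chn K es \<longleftrightarrow> (\<forall>i. Suc i < length es \<longrightarrow> drop 1 (es!i) = take K (es!Suc i))"

lemma chn_snoc:
  assumes "chn K (es @ [e])"
  shows "chn K es \<and> (es \<noteq> [] \<longrightarrow> drop 1 (last es) = take K e)"
proof
  show "chn K es" unfolding chn_def
  proof (intro allI impI)
    fix i assume i: "Suc i < length es"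
    then show "drop 1 (es!i) = take K (es!Suc i)"
      using assms unfolding chn_def by (auto simp: nth_append dest!: spec[of _ i])
  qed
  show "es \<noteq> [] \<longrightarrow> drop 1 (last es) = take K e"
  proof
    assume ne: "es \<noteq> []"
    define i where "i = length es - 1"
    have "Suc i < length (es @ [e])" "Suc i = length es" "i < length es" using ne i_def by auto
    then have "drop 1 ((es @ [e])!i) = take K ((es @ [e])!Suc i)" using assms unfolding chn_def by blast
    then show "drop 1 (last es) = take K e"
      using \<open>Suc i = length es\<close> \<open>i < length es\<close> ne i_def by (simp add: nth_append last_conv_nth)
  qed
qed

lemma pe_path:
  "es \<noteq> [] \<Longrightarrow> \<forall>e\<in>set es. length e = Suc K \<Longrightarrow> chn K es \<Longrightarrow>
   pe (take K (hd es)) (map last es) = drop 1 (last es)"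
proof (induction es rule: rev_induct)
  case Nil then show ?case by simp
next
  case (snoc e es)
  have le: "length e = Suc K" using snoc.prems by auto
  show ?case
  proof (cases "es = []")
    case True then show ?thesis using pe_edge[OF le] by simp
  next
    case False
    have ch: "chn K es" "drop 1 (last es) = take K e" using chn_snoc[OF snoc.prems(3)] False by auto
    have "pe (take K (hd (es @ [e]))) (map last (es @ [e])) = pe (pe (take K (hd es)) (map last es)) [last e]"
      using False by (simp add: pe_append)
    also have "\<dots> = pe (take K e) [last e]" using snoc.IH[OF False _ ch(1)] snoc.prems(2) ch(2) by simp
    also have "\<dots> = drop 1 (last (es @ [e]))" using pe_edge[OF le] by simp
    finally show ?thesis .
  qed
qed

lemma cyc_rot: "cyc (a @ b) = cyc (b @ a)"
proof (cases "a @ b = []")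
  case True then show ?thesis by simp
next
  case False
  define n where "n = length (a @ b)"
  have n: "n > 0" using False n_def by simp
  have "(\<lambda>i. (b @ a) ! nat (i mod int (length (b @ a)))) = (\<lambda>i. (a @ b) ! nat ((i + int (length a)) mod int (length (a @ b))))"
  proof
    fix i
    define j where "j = i mod int n"
    have j: "0 \<le> j" "j < int n" using n j_def by auto
    have ij: "(i + int (length a)) mod int n = (j + int (length a)) mod int n" unfolding j_def by (simp add: mod_add_left_eq)
    have ln: "length (b @ a) = n" "length (a @ b) = n" using n_def by auto
    have e1: "nat (i mod int (length (b @ a))) = nat j" using ln j_def by simp
    have e2: "nat ((i + int (length a)) mod int (length (a @ b))) = nat ((j + int (length a)) mod int n)"
      by (simp only: ln(2) ij)
    show "(b @ a) ! nat (i mod int (length (b @ a))) = (a @ b) ! nat ((i + int (length a)) mod int (length (a @ b)))"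
      unfolding e1 e2
    proof (cases "nat j < length b")
      case True
      then have "(j + int (length a)) mod int n = j + int (length a)" using j n_def by simp
      then have "nat ((j + int (length a)) mod int n) = length a + nat j" using j by simp
      then show "(b @ a) ! nat j = (a @ b) ! nat ((j + int (length a)) mod int n)"
        using True by (simp add: nth_append)
    next
      case False
      have "(j + int (length a)) mod int n = (j - int (length b) + int n) mod int n" using n_def by simp
      also have "\<dots> = (j - int (length b)) mod int n" by (rule mod_add_self2)
      also have "\<dots> = j - int (length b)" using False j by simp
      finally have m: "(j + int (length a)) mod int n = j - int (length b)" .
      have "nat ((j + int (length a)) mod int n) = nat j - length b"
        unfolding m using j False by (simp add: nat_diff_distrib)
      moreover have "nat j - length b < length a" using j n_def False by simp
      ultimately show "(b @ a) ! nat j = (a @ b) ! nat ((j + int (length a)) mod int n)"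
        using False by (simp add: nth_append)
    qed
  qed
  note eq = this
  have "cyc (b @ a) = shift_orbit (\<lambda>i. (a @ b) ! nat ((i + int (length a)) mod int (length (a @ b))))"
    unfolding cyc_def eq by (rule refl)
  also have "\<dots> = cyc (a @ b)" unfolding cyc_def by (rule so_shift)
  finally show ?thesis by (rule sym)
qed



lemma loop_exists:
  assumes C: "chromosome_set C" and cond: "\<forall>v::'a list. length v = K \<longrightarrow> conductor C v"
  shows "es \<noteq> [] \<Longrightarrow> \<forall>e\<in>set es. length e = Suc K \<and> substring_of e C \<Longrightarrow> chn K es \<Longrightarrow>
    \<exists>R. cyc (map last es @ R) \<in> C \<and> pe (take K (hd es)) (map last es @ R) = take K (hd es)"
proof (induction es rule: rev_induct)
  case Nil then show ?case by simp
next
  case (snoc e es)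
  have e: "length e = Suc K" "substring_of e C" using snoc.prems by auto
  obtain r where r: "cyc (last e # r) \<in> C" "pe (take K e) (last e # r) = take K e"
    using edge_loop[OF C e(2) e(1)] by blast
  show ?case
  proof (cases "es = []")
    case True then show ?thesis using r by (intro exI[of _ r]) simp
  next
    case False
    have ch: "chn K es" "drop 1 (last es) = take K e" using chn_snoc[OF snoc.prems(3)] False by auto
    obtain R where R: "cyc (map last es @ R) \<in> C" "pe (take K (hd es)) (map last es @ R) = take K (hd es)"
      using snoc.IH[OF False _ ch(1)] snoc.prems(2) by auto
    define v0 where "v0 = take K (hd es)"
    define X where "X = map last es"
    define u where "u = take K e"
    have pX: "pe v0 X = u" using pe_path[OF False _ ch(1)] snoc.prems(2) ch(2)
      unfolding v0_def X_def u_def by auto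
    have pR: "pe u R = v0" using R(2) unfolding pe_append pX[symmetric] v0_def X_def by simp
    have loopa: "pe u (R @ X) = u" unfolding pe_append pR pX ..
    have lu: "length u = K" using e(1) u_def by simp
    have cu: "conductor C u" using cond lu by blast
    have Xne: "X \<noteq> []" using False X_def by simp
    have "cyc ((R @ X) @ (last e # r)) \<in> C \<longleftrightarrow> cyc (R @ X) \<in> C \<and> cyc (last e # r) \<in> C"
      using cu Xne loopa r(2) unfolding conductor_def suffix_pe u_def[symmetric] by blast
    moreover have "cyc (R @ X) \<in> C" using R(1) cyc_rot[of R X] unfolding X_def by simp
    ultimately have c1: "cyc ((R @ X) @ (last e # r)) \<in> C" using r(1) by blast
    have "cyc (X @ (last e # r) @ R) = cyc (R @ X @ (last e # r))" using cyc_rot[of "X @ (last e # r)" R] by simp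
    then have c2: "cyc (X @ (last e # r) @ R) \<in> C" using c1 by simp
    have p2: "pe v0 (X @ (last e # r) @ R) = v0" unfolding pe_append pX using r(2) pR u_def by simp
    show ?thesis
      using c2 p2 False unfolding X_def v0_def by (intro exI[of _ "r @ R"]) simp
  qed
qed

lemma concat_edges: "\<forall>e\<in>set l. length e = Suc K \<Longrightarrow>
  concat (map (\<lambda>e. drop (length (take K e)) e) l) = map last l"
  by (induction l) (auto simp: drop_edge min_def)

lemma walk_label_DBG:
  assumes "es \<noteq> []" "\<forall>e\<in>set es. length e = Suc K"
  shows "walk_label (DBG C K) es = take K (hd es) @ map last es"
proof -
  have 1: "concat (map (\<lambda>e. drop (length (take K e)) e) (tl es)) = map last (tl es)"
  proof -
    have "\<forall>e\<in>set (tl es). length e = Suc K" using assms(2) by (meson list.set_sel(2) assms(1))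
    then show ?thesis by (rule concat_edges)
  qed
  have "length (hd es) = Suc K" using assms by simp
  then have "hd es = take K (hd es) @ [last (hd es)]" using split_edge by metis
  then have "walk_label (DBG C K) es = take K (hd es) @ [last (hd es)] @ map last (tl es)"
    unfolding walk_label_def DBG_def using 1 by simp
  also have "\<dots> = take K (hd es) @ map last es" using assms(1) by (cases es) auto
  finally show ?thesis .
qed



lemma CPC_sub:
  assumes C: "chromosome_set C" and cond: "\<forall>v::'a list. length v = K \<longrightarrow> conductor C v"
    and S: "S \<in> CPC (DBG C K)"
  shows "S \<in> C"
proof -
  obtain es x where S: "S = cyc x" and cw: "closed_walk (DBG C K) es" and xne: "x \<noteq> []"
    and wl: "walk_label (DBG C K) es = vlab (DBG C K) (src (DBG C K) (hd es)) @ x"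
    using S unfolding CPC_def by blast
  have ne: "es \<noteq> []" using cw unfolding closed_walk_def by simp
  have edges: "\<forall>e\<in>set es. length e = Suc K \<and> substring_of e C"
    using cw unfolding closed_walk_def DBG_def by auto
  then have lens: "\<forall>e\<in>set es. length e = Suc K" by blast
  have ch: "chn K es" using cw unfolding closed_walk_def DBG_def chn_def by simp
  have cl: "drop 1 (last es) = take K (hd es)" using cw unfolding closed_walk_def DBG_def by simp
  have "take K (hd es) @ map last es = take K (hd es) @ x"
    using wl walk_label_DBG[OF ne lens, of C] unfolding DBG_def by simp
  then have x: "x = map last es" by simp
  obtain R where R: "cyc (map last es @ R) \<in> C" "pe (take K (hd es)) (map last es @ R) = take K (hd es)"
    using loop_exists[OF C cond ne edges ch] by blast
  define v0 where "v0 = take K (hd es)"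
  define X where "X = map last es"
  have pX: "pe v0 X = v0" using pe_path[OF ne lens ch] cl unfolding v0_def X_def by simp
  show ?thesis
  proof (cases "R = []")
    case True then show ?thesis using R(1) S x by simp
  next
    case False
    have pR: "pe v0 R = v0" using R(2) unfolding pe_append v0_def[symmetric] X_def[symmetric] pX .
    have lv: "length v0 = K" unfolding v0_def using lens ne by simp
    have "conductor C v0" using cond lv by blast
    then have "cyc (X @ R) \<in> C \<longleftrightarrow> cyc X \<in> C \<and> cyc R \<in> C"
      using False xne x pX pR unfolding conductor_def suffix_pe X_def by blast
    then show ?thesis using R(1) S x X_def by simp
  qed
qed



lemma length_concat_rep: "length (concat (replicate k ys)) = k * length ys"
  by (induction k) auto

lemma rot_rep:
  assumes "k \<ge> 1" shows "drop (length ys) (concat (replicate k ys)) @ take (length ys) (concat (replicate k ys)) = concat (replicate k ys)"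
proof -
  obtain m where k: "k = Suc m" using assms by (cases k) auto
  have "concat (replicate k ys) = ys @ concat (replicate m ys)" using k by simp
  moreover have "concat (replicate m ys) @ ys = concat (replicate k ys)"
  proof -
    have "concat (replicate m ys) @ ys = concat (replicate m ys @ [ys])" by simp
    also have "\<dots> = concat (ys # replicate m ys)" by (simp only: replicate_append_same)
    also have "\<dots> = concat (replicate k ys)" using k by simp
    finally show ?thesis .
  qed
  ultimately show ?thesis by simp
qed

lemma C_sub_CPC:
  assumes C: "chromosome_set C" and K: "K \<ge> 1" and S: "S \<in> C"
  shows "S \<in> CPC (DBG C K)"
proof -
  obtain g where g: "periodic_word g" "S = shift_orbit g"
    using C S unfolding chromosome_set_def is_cyclic_string_def by blast
  obtain p::int where p: "p>0" "\<forall>i. g (i+p) = g i" using g(1) unfolding periodic_word_def by blast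
  have ex: "\<exists>n::nat. n > 0 \<and> (\<forall>i. g (i + int n) = g i)"
    using p by (intro exI[of _ "nat p"]) simp
  define P where "P = (LEAST n::nat. n > 0 \<and> (\<forall>i. g (i + int n) = g i))"
  have P: "P > 0" "\<forall>i. g (i + int P) = g i" using LeastI_ex[OF ex] unfolding P_def by auto
  have Pmin: "\<not> (q > 0 \<and> (\<forall>i. g (i + int q) = g i))" if "q < P" for q
    using not_less_Least[of q "\<lambda>n. n > 0 \<and> (\<forall>i. g (i + int n) = g i)"] that unfolding P_def by blast
  have gS: "g \<in> S" using g(2) so_self by simp
  have sub: "substring_of (map (\<lambda>j. g (i + int j)) [0..<m]) C" for i m
    unfolding substring_of_def using S gS by (intro bexI[of _ S] bexI[of _ g] exI[of _ i]) auto
  define w where "w i = map (\<lambda>j. g (i + int j)) [0..<Suc K]" for i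
  have tw: "take K (w i) = map (\<lambda>j. g (i + int j)) [0..<K]" for i
    unfolding w_def by (rule nth_equalityI) auto
  have dw: "drop 1 (w i) = map (\<lambda>j. g (i + 1 + int j)) [0..<K]" for i
  proof (rule nth_equalityI)
    show "length (drop 1 (w i)) = length (map (\<lambda>j. g (i + 1 + int j)) [0..<K])"
      unfolding w_def by (simp del: upt_Suc)
    fix j assume "j < length (drop 1 (w i))"
    then have j: "j < K" unfolding w_def by (simp del: upt_Suc)
    have "drop 1 (w i) ! j = w i ! (1 + j)" unfolding w_def using j by (subst nth_drop) (auto simp del: upt_Suc)
    also have "\<dots> = g (i + 1 + int j)" unfolding w_def using j by (simp del: upt_Suc add: algebra_simps)
    also have "\<dots> = map (\<lambda>j. g (i + 1 + int j)) [0..<K] ! j" using j by simp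
    finally show "drop 1 (w i) ! j = map (\<lambda>j. g (i + 1 + int j)) [0..<K] ! j" .
  qed
  have lw: "last (w i) = g (i + int K)" for i
    unfolding w_def by (simp del: upt_Suc add: last_map last_upt)
  have hw: "hd (w i) = g i" for i
    unfolding w_def by (simp del: upt_Suc add: hd_map hd_upt)
  have lenw: "length (w i) = Suc K" for i unfolding w_def by simp
  define es where "es = map (\<lambda>t. w (int t)) [0..<P]"
  have lenes: "length es = P" unfolding es_def by simp
  have nes: "t < P \<Longrightarrow> es ! t = w (int t)" for t unfolding es_def by simp
  have ne: "es \<noteq> []" using P(1) lenes by auto
  have edges: "\<forall>e\<in>set es. length e = Suc K \<and> substring_of e C"
    unfolding es_def using lenw sub unfolding w_def by (auto simp del: upt_Suc)
  have verts: "\<forall>e\<in>set es. substring_of (take K e) C \<and> substring_of (drop 1 e) C"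
    unfolding es_def using tw dw sub by auto
  have ch: "drop 1 (es ! i) = take K (es ! Suc i)" if "Suc i < length es" for i
    using that lenes nes dw tw by (simp add: add.commute)
  have hdes: "hd es = w 0" unfolding es_def using P(1) by (simp add: hd_map)
  have lastes: "last es = w (int P - 1)" unfolding es_def using P(1) by (simp add: last_map of_nat_diff)
  have cl: "drop 1 (last es) = take K (hd es)"
    unfolding lastes hdes dw tw using P(2) by (simp add: add.commute)
  have cw: "closed_walk (DBG C K) es"
    unfolding closed_walk_def DBG_def using ne edges verts ch cl by auto
  have wl: "walk_label (DBG C K) es = vlab (DBG C K) (src (DBG C K) (hd es)) @ map last es"
    using walk_label_DBG[OF ne, of K C] edges unfolding DBG_def by simp
  have xne: "map last es \<noteq> []" using ne by simp
  have mx: "map last es = map (\<lambda>t. g (int K + int t)) [0..<P]"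
    unfolding es_def using lw by (simp add: add.commute)
  have cx: "cyc (map last es) = S" unfolding mx g(2) by (rule cyc_window[OF P(2) P(1)])
  have prim: "primitive_walk es"
    unfolding primitive_walk_def
  proof
    assume "\<exists>ys k. k \<ge> 2 \<and> es = concat (replicate k ys)"
    then obtain ys k where k: "k \<ge> 2" and esr: "es = concat (replicate k ys)" by blast
    define q where "q = length ys"
    have Pq: "P = k * q" using lenes esr length_concat_rep q_def by metis
    have q0: "q > 0" using Pq P(1) by (cases q) auto
    have "1 * q < k * q" using k q0 by (intro mult_strict_right_mono) auto
    then have q: "q > 0" "q < P" using q0 Pq by auto
    have rot: "drop q es @ take q es = es" using rot_rep[of k ys] k esr q_def by simp
    define H where "H = map hd es"
    have Hn: "t < P \<Longrightarrow> H ! t = g (int t)" for t unfolding H_def using lenes nes hw by simp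
    have lH: "length H = P" unfolding H_def using lenes by simp
    have Hrot: "drop q H @ take q H = H" unfolding H_def using rot by (metis drop_map map_append take_map)
    have gt: "g (int t + int q) = g (int t)" if t: "t < P" for t
    proof (cases "t < P - q")
      case True
      have "g (int t) = H ! t" using Hn t by simp
      also have "\<dots> = (drop q H @ take q H) ! t" using Hrot by simp
      also have "\<dots> = H ! (q + t)" using True lH by (simp add: nth_append)
      also have "\<dots> = g (int t + int q)" using Hn True by (simp add: add.commute)
      finally show ?thesis by simp
    next
      case False
      have "g (int t) = H ! t" using Hn t by simp
      also have "\<dots> = (drop q H @ take q H) ! t" using Hrot by simp
      also have "\<dots> = H ! (t - (P - q))" using False lH t q by (simp add: nth_append)
      also have "\<dots> = g (int (t - (P - q)))" using Hn t by simp
      also have "\<dots> = g (int (t - (P - q)) + int P)" using P(2) by simp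
      also have "int (t - (P - q)) + int P = int t + int q" using False q t by simp
      finally show ?thesis by simp
    qed
    have "\<forall>i. g (i + int q) = g i"
    proof
      fix i
      define t where "t = nat (i mod int P)"
      have m: "0 \<le> i mod int P" "i mod int P < int P" using P(1) by auto
      then have t: "t < P" "int t = i mod int P" unfolding t_def by auto
      have "g (i + int q) = g ((i + int q) mod int P)" using per_mod[OF P(2)] by simp
      also have "\<dots> = g ((int t + int q) mod int P)" unfolding t(2) by (simp add: mod_add_left_eq)
      also have "\<dots> = g (int t + int q)" using per_mod[OF P(2)] by simp
      also have "\<dots> = g (int t)" using gt t(1) by simp
      also have "\<dots> = g i" unfolding t(2) using per_mod[OF P(2)] by simp
      finally show "g (i + int q) = g i" .
    qed
    then show False using Pmin[OF q(2)] q(1) by blast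
  qed
  show ?thesis unfolding CPC_def using cw prim xne wl cx by blast
qed


theorem theorem6:
  fixes C :: "(int \<Rightarrow> 'a::finite) set set" and K :: nat
  assumes "chromosome_set C"
    and "K \<ge> 1"
    and "\<forall>v::'a list. length v = K \<longrightarrow> conductor C v"
  shows "CPC (DBG C K) = C"
proof
  show "CPC (DBG C K) \<subseteq> C" using CPC_sub[OF assms(1) assms(3)] by blast
  show "C \<subseteq> CPC (DBG C K)" using C_sub_CPC[OF assms(1) assms(2)] by blast
qed

end
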